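(* Let $0\le r\le n/2$, $B=B(n,r)=\{x:|x|\le r\}\subseteq\{0,1\}^n$, $A$ the adjacency matrix of the subgraph of the Hamming cube induced by $B$, and $y\in B$ with $|y|=t$. Let $W_y = S^{(B)}_y\cap\left\langle\{S^{(B)}_z\}_{z\in B,\,|z|<t}\right\rangle^\perp$. Then $\dim W_y = r-t+1$. Furthermore, $W_y$ has a basis $f_{y,t},\dots,f_{y,r}$, where $f_{y,i}$ is the unique function on $B$ vanishing outside $S(n,i)$ whose restriction to $S(n,i)$ lies in $V_{y,i}$ and satisfies $f_{y,i}(x)=1$ for all $x\in S(n,i)$ with $y\subseteq x$. In this basis the restriction $A_y$ of $A$ to $W_y$ is the tridiagonal $(r-t+1)\times(r-t+1)$ matrix with zero diagonal, superdiagonal entries $\beta_{t+1},\dots,\beta_r$ and subdiagonal entries $\gamma_t,\dots,\gamma_{r-1}$; equivalently, $A f_{y,t}=\gamma_t f_{y,t+1}$ (if $t<r$), $A f_{y,r}=\beta_r f_{y,r-1}$ (if $t<r$), and $A f_{y,i} = \beta_i f_{y,i-1}+\gamma_i f_{y,i+1}$ for $t<i<r$ (and $A f_{y,t}=0$ if $t=r$). Here $\beta_i = n-i+1$ and $\gamma_i = \frac{(i-t+1)(n-t-i)}{n-i}$.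
   Context: $\{0,1\}^n$ is the Hamming cube (vertices adjacent iff Hamming distance $1$); points are identified with subsets of $\{1,\dots,n\}$; $|x-y|$ is the Hamming distance and $|x|$ the weight. $S^{(B)}_y$ is the space of real functions $f$ on $B$ such that $f(x)$ depends only on $(|x|,|x-y|)$; orthogonality on $B$ is with respect to $\sum_{x\in B}f(x)g(x)$, and the span of an empty family is $\{0\}$. $S(n,i)=\{x:|x|=i\}$ with inner product $\sum_{x\in S(n,i)}f(x)g(x)$. For $|z|\le i$, $g_z$ on $S(n,i)$ is $1$ at $x$ if $z\subseteq x$ and $0$ otherwise; $U_j=\mathrm{span}\{g_z:|z|\le j\}$; the eigenspaces of $S(n,i)$ are $V_0=U_0$ and $V_j=U_j\cap U_{j-1}^\perp$ for $1\le j\le i$. For $t\le i\le r$, $V_{y,i}$ is the space of functions in the $t$-th eigenspace $V_t$ of $S(n,i)$ whose value at $x$ depends only on $|x-y|$. *)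

theory Defs
  imports "HOL-Analysis.Analysis" "HOL-Library.Function_Algebras"
begin

text \<open>Real-valued functions on points of the cube (points = subsets of {1..n}).
  A function "on" a finite set X of points is represented by a function of type
  nat set => real that vanishes outside X.\<close>

definition fscale :: "real \<Rightarrow> (nat set \<Rightarrow> real) \<Rightarrow> (nat set \<Rightarrow> real)" where
  "fscale c f = (\<lambda>x. c * f x)"

global_interpretation fvs: vector_space fscale
  by unfold_locales (auto simp: fscale_def algebra_simps)

definition cube :: "nat \<Rightarrow> nat set set" where
  "cube n = {x. x \<subseteq> {1..n}}"

definition hdist :: "nat set \<Rightarrow> nat set \<Rightarrow> nat" where
  "hdist x y = card ((x - y) \<union> (y - x))"

definition ball_B :: "nat \<Rightarrow> nat \<Rightarrow> nat set set" where
  "ball_B n r = {x \<in> cube n. card x \<le> r}"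

definition layer :: "nat \<Rightarrow> nat \<Rightarrow> nat set set" where
  "layer n i = {x \<in> cube n. card x = i}"

definition funs_on :: "nat set set \<Rightarrow> (nat set \<Rightarrow> real) set" where
  "funs_on X = {f. \<forall>x. x \<notin> X \<longrightarrow> f x = 0}"

definition ip :: "nat set set \<Rightarrow> (nat set \<Rightarrow> real) \<Rightarrow> (nat set \<Rightarrow> real) \<Rightarrow> real" where
  "ip X f g = (\<Sum>x\<in>X. f x * g x)"

definition orth :: "nat set set \<Rightarrow> (nat set \<Rightarrow> real) set \<Rightarrow> (nat set \<Rightarrow> real) set" where
  "orth X U = {f \<in> funs_on X. \<forall>g\<in>U. ip X f g = 0}"

definition adj :: "nat \<Rightarrow> nat \<Rightarrow> (nat set \<Rightarrow> real) \<Rightarrow> (nat set \<Rightarrow> real)" where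
  "adj n r f = (\<lambda>x. if x \<in> ball_B n r
      then (\<Sum>x'\<in>{x'\<in>ball_B n r. hdist x x' = 1}. f x') else 0)"

definition SB :: "nat \<Rightarrow> nat \<Rightarrow> nat set \<Rightarrow> (nat set \<Rightarrow> real) set" where
  "SB n r y = {f \<in> funs_on (ball_B n r). \<forall>x\<in>ball_B n r. \<forall>x'\<in>ball_B n r.
      card x = card x' \<and> hdist x y = hdist x' y \<longrightarrow> f x = f x'}"

definition W :: "nat \<Rightarrow> nat \<Rightarrow> nat set \<Rightarrow> (nat set \<Rightarrow> real) set" where
  "W n r y = SB n r y \<inter>
     orth (ball_B n r) (fvs.span (\<Union>z\<in>{z\<in>ball_B n r. card z < card y}. SB n r z))"

definition gz :: "nat \<Rightarrow> nat \<Rightarrow> nat set \<Rightarrow> (nat set \<Rightarrow> real)" where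
  "gz n i z = (\<lambda>x. if x \<in> layer n i \<and> z \<subseteq> x then 1 else 0)"

definition U :: "nat \<Rightarrow> nat \<Rightarrow> nat \<Rightarrow> (nat set \<Rightarrow> real) set" where
  "U n i j = fvs.span {gz n i z | z. z \<in> cube n \<and> card z \<le> j}"

definition V :: "nat \<Rightarrow> nat \<Rightarrow> nat \<Rightarrow> (nat set \<Rightarrow> real) set" where
  "V n i j = (if j = 0 then U n i 0 else U n i j \<inter> orth (layer n i) (U n i (j - 1)))"

definition Vy :: "nat \<Rightarrow> nat set \<Rightarrow> nat \<Rightarrow> (nat set \<Rightarrow> real) set" where
  "Vy n y i = {f \<in> V n i (card y). \<forall>x\<in>layer n i. \<forall>x'\<in>layer n i.
      hdist x y = hdist x' y \<longrightarrow> f x = f x'}"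

text \<open>The defining property of f_{y,i}: a function on B vanishing outside S(n,i),
  whose restriction to S(n,i) lies in V_{y,i}, equal to 1 on all x in S(n,i) with y
  a subset of x. (B contains S(n,i) for i <= r, so such a function is just a function
  vanishing outside S(n,i).)\<close>
definition is_fy :: "nat \<Rightarrow> nat set \<Rightarrow> nat \<Rightarrow> (nat set \<Rightarrow> real) \<Rightarrow> bool" where
  "is_fy n y i f \<longleftrightarrow> f \<in> funs_on (layer n i) \<and> f \<in> Vy n y i \<and>
      (\<forall>x\<in>layer n i. y \<subseteq> x \<longrightarrow> f x = 1)"

definition fy :: "nat \<Rightarrow> nat set \<Rightarrow> nat \<Rightarrow> (nat set \<Rightarrow> real)" where
  "fy n y i = (THE f. is_fy n y i f)"

definition beta :: "nat \<Rightarrow> nat \<Rightarrow> real" where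
  "beta n i = real n - real i + 1"

definition gamma :: "nat \<Rightarrow> nat \<Rightarrow> nat \<Rightarrow> real" where
  "gamma n t i = (real i - real t + 1) * (real n - real t - real i) / (real n - real i)"

end

theory Submission
  imports Defs
begin

definition bb :: "nat \<Rightarrow> nat \<Rightarrow> nat \<Rightarrow> real" where
  "bb m N k = (-1)^k * fact (m + k) * fact (N - k) / (fact m * fact N)"

lemma bb0: "bb m N 0 = 1"
  by (simp add: bb_def)

lemma bbD0:
  assumes "Suc j \<le> N"
  shows "real (Suc j) * bb 0 N j + (real N + 1 - real (Suc j)) * bb 0 N (Suc j) = 0"
proof -
  obtain s where N: "N = Suc j + s" using assms le_Suc_ex by blast
  define x where "x = (-1)^j * fact j * fact s / (fact N :: real)"
  have "N - j = Suc s" "N - Suc j = s" using N by auto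
  then have 1: "bb 0 N j = x * (real s + 1)" and 2: "bb 0 N (Suc j) = - x * (real j + 1)"
    by (simp_all add: bb_def x_def fact_Suc del: fact_Suc_0)
  have 3: "real N + 1 - real (Suc j) = real s + 1" using N by simp
  show ?thesis unfolding 1 2 3 by (simp add: algebra_simps)
qed

lemma bbD1:
  assumes "k \<le> N"
  shows "real k * bb (Suc m) N (k - 1) + (real N + 1 - real k) * bb (Suc m) N k
         = (real N + 1) * bb m (Suc N) k"
proof (cases k)
  case 0
  then show ?thesis by (simp add: bb_def fact_Suc del: fact_Suc_0)
next
  case (Suc j)
  obtain s where N: "N = Suc j + s" using assms Suc le_Suc_ex by blast
  define x where "x = (-1)^j * fact (m + j + 1) * fact s / (fact m * fact N :: real)"
  have e: "N - j = Suc s" "N - Suc j = s" "Suc N - Suc j = Suc s" using N by auto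
  have 1: "bb (Suc m) N j = x * (real s + 1) / (real m + 1)"
    using e by (simp add: bb_def x_def fact_Suc del: fact_Suc_0; simp add: field_simps)
  have 2: "bb (Suc m) N (Suc j) = - x * ((real m + 1) + real j + 1) / (real m + 1)"
    using e by (simp add: bb_def x_def fact_Suc del: fact_Suc_0; simp add: field_simps)
  have 3: "bb m (Suc N) (Suc j) = - x * (real s + 1) / (real N + 1)"
    using e by (simp add: bb_def x_def fact_Suc del: fact_Suc_0; simp add: field_simps)
  have 4: "real N + 1 - real k = real s + 1" "real k = real j + 1" "k - 1 = j" using N Suc by simp_all
  have g: "\<And>M P (J::real) S. M \<noteq> 0 \<Longrightarrow> P \<noteq> 0 \<Longrightarrow>
       (J + 1) * (x * (S + 1) / M) + (S + 1) * (- x * (M + J + 1) / M) = P * (- x * (S + 1) / P)"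
    by (simp add: field_simps; simp add: algebra_simps)
  have "(real j + 1) * (x * (real s + 1) / (real m + 1)) + (real s + 1) * (- x * ((real m + 1) + real j + 1) / (real m + 1))
     = (real N + 1) * (- x * (real s + 1) / (real N + 1))"
    by (rule g) linarith+
  moreover have "real k * bb (Suc m) N (k - 1) = (real j + 1) * (x * (real s + 1) / (real m + 1))"
    by (simp only: 4(2,3) 1)
  moreover have "(real N + 1 - real k) * bb (Suc m) N k = (real s + 1) * (- x * ((real m + 1) + real j + 1) / (real m + 1))"
    unfolding 4(1) by (simp only: Suc 2)
  moreover have "bb m (Suc N) k = - x * (real s + 1) / (real N + 1)"
    by (simp only: Suc 3)
  ultimately show ?thesis by simp
qed

lemma bbU:
  assumes "k \<le> t" "t + 1 \<le> N"
  shows "(real t - real k) * bb m N (Suc k) + (real m + 1 + real k) * bb m N k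
         = ((real m + 1) * (real N - real t) / real N) * bb (Suc m) (N - 1) k"
proof -
  have "Suc k \<le> N" using assms by simp
  then obtain s where N: "N = Suc k + s" using le_Suc_ex by blast
  define x where "x = (-1)^k * fact (m + k) * fact s / (fact m * fact N :: real)"
  have e: "N - k = Suc s" "N - Suc k = s" "N - 1 - k = s" "N - 1 = k + s" using N by auto
  have 1: "bb m N (Suc k) = - x * (real m + 1 + real k)"
    using e by (simp add: bb_def x_def fact_Suc del: fact_Suc_0; simp add: field_simps)
  have 2: "bb m N k = x * (real s + 1)"
    using e by (simp add: bb_def x_def fact_Suc del: fact_Suc_0; simp add: field_simps)
  have 3: "bb (Suc m) (N - 1) k = x * (real m + 1 + real k) * real N / (real m + 1)"
    using e by (simp add: bb_def x_def fact_Suc N del: fact_Suc_0; simp add: field_simps)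
  have 4: "real N = real k + real s + 1" using N by simp
  have 2: "bb m N k = x * (real N - real k)" unfolding 2 4 by simp
  have g: "\<And>M P (K::real) T. M \<noteq> 0 \<Longrightarrow> P \<noteq> 0 \<Longrightarrow>
       (T - K) * (- x * (M + K)) + (M + K) * (x * (P - K))
     = (M * (P - T) / P) * (x * (M + K) * P / M)"
    by (simp add: field_simps; simp add: algebra_simps)
  have "(real t - real k) * (- x * (real m + 1 + real k)) + (real m + 1 + real k) * (x * (real N - real k))
     = ((real m + 1) * (real N - real t) / real N) * (x * (real m + 1 + real k) * real N / (real m + 1))"
    by (rule g) (use 4 in linarith)+
  then show ?thesis by (simp only: 1 2 3)
qed


lemma sum_fun_apply: "(sum F A) x = (\<Sum>i\<in>A. F i x)"
  by (induct A rule: infinite_finite_induct) auto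

lemma cube_finite: "x \<in> cube n \<Longrightarrow> finite x"
  unfolding cube_def using finite_subset by blast

lemma cube_eq: "cube n = Pow {1..n}"
  unfolding cube_def by auto

lemma finite_cube: "finite (cube n)"
  by (simp add: cube_eq)

lemma finite_layer: "finite (layer n i)"
  unfolding layer_def using finite_cube by simp

lemma finite_ball: "finite (ball_B n r)"
  unfolding ball_B_def using finite_cube by simp

lemma layer_sub_ball: "i \<le> r \<Longrightarrow> layer n i \<subseteq> ball_B n r"
  unfolding layer_def ball_B_def by auto

lemma ball_sub_cube: "ball_B n r \<subseteq> cube n"
  unfolding ball_B_def by auto

lemma layer_sub_cube: "layer n i \<subseteq> cube n"
  unfolding layer_def by auto

lemma hdist_card: "finite x \<Longrightarrow> finite y \<Longrightarrow> hdist x y + 2 * card (x \<inter> y) = card x + card y"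
proof -
  assume fx: "finite x" and fy: "finite y"
  have "hdist x y = card (x - y) + card (y - x)"
    unfolding hdist_def by (rule card_Un_disjoint) (use fx fy in auto)
  moreover have "card (x - y) + card (x \<inter> y) = card x"
  proof -
    have "(x - y) \<inter> (x \<inter> y) = {}" "(x - y) \<union> (x \<inter> y) = x" by blast+
    then show ?thesis using card_Un_disjoint[of "x - y" "x \<inter> y"] fx by simp
  qed
  moreover have "card (y - x) + card (x \<inter> y) = card y"
  proof -
    have "(y - x) \<inter> (x \<inter> y) = {}" "(y - x) \<union> (x \<inter> y) = y" by blast+
    then show ?thesis using card_Un_disjoint[of "y - x" "x \<inter> y"] fy by simp
  qed
  ultimately show ?thesis by simp
qed

lemma card_diff_int: "finite y \<Longrightarrow> card (y - x) + card (x \<inter> y) = card y"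
proof -
  assume fy: "finite y"
  have "(y - x) \<inter> (x \<inter> y) = {}" "(y - x) \<union> (x \<inter> y) = y" by blast+
  then show ?thesis using card_Un_disjoint[of "y - x" "x \<inter> y"] fy by simp
qed


lemma nbrs:
  assumes x: "x \<in> cube n"
  shows "{x' \<in> cube n. hdist x x' = 1} = (\<lambda>e. insert e x) ` ({1..n} - x) \<union> (\<lambda>e. x - {e}) ` x"
proof (intro equalityI subsetI)
  fix x' assume "x' \<in> {x' \<in> cube n. hdist x x' = 1}"
  then have x': "x' \<in> cube n" and h: "card ((x - x') \<union> (x' - x)) = 1"
    unfolding hdist_def by auto
  then obtain e where E: "(x - x') \<union> (x' - x) = {e}" by (auto simp: card_Suc_eq)
  have E1: "\<And>a. a \<in> x \<Longrightarrow> a \<notin> x' \<Longrightarrow> a = e" and E2: "\<And>a. a \<in> x' \<Longrightarrow> a \<notin> x \<Longrightarrow> a = e"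
    and E3: "(e \<in> x \<and> e \<notin> x') \<or> (e \<in> x' \<and> e \<notin> x)"
    using E by (simp_all add: set_eq_iff) blast+
  show "x' \<in> (\<lambda>e. insert e x) ` ({1..n} - x) \<union> (\<lambda>e. x - {e}) ` x"
  proof (cases "e \<in> x")
    case True
    have "x' = x - {e}"
    proof (intro equalityI subsetI)
      fix a assume "a \<in> x'" then show "a \<in> x - {e}" using E2 E3 True by blast
    next
      fix a assume "a \<in> x - {e}" then show "a \<in> x'" using E1 by blast
    qed
    then show ?thesis using True by blast
  next
    case False
    have "x' = insert e x"
    proof (intro equalityI subsetI)
      fix a assume "a \<in> x'" then show "a \<in> insert e x" using E2 by blast
    next
      fix a assume "a \<in> insert e x" then show "a \<in> x'" using E1 E3 False by blast
    qed
    moreover have "e \<in> x'" using E3 False by blast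
    then have "e \<in> {1..n}" using x' unfolding cube_def by blast
    ultimately show ?thesis using False by blast
  qed
next
  fix x' assume "x' \<in> (\<lambda>e. insert e x) ` ({1..n} - x) \<union> (\<lambda>e. x - {e}) ` x"
  then show "x' \<in> {x' \<in> cube n. hdist x x' = 1}"
  proof
    assume "x' \<in> (\<lambda>e. insert e x) ` ({1..n} - x)"
    then obtain e where e: "e \<in> {1..n}" "e \<notin> x" and x'e: "x' = insert e x" by auto
    have "(x - x') \<union> (x' - x) = {e}" using e x'e by auto
    moreover have "x' \<in> cube n" using x e x'e unfolding cube_def by auto
    ultimately show ?thesis unfolding hdist_def by simp
  next
    assume "x' \<in> (\<lambda>e. x - {e}) ` x"
    then obtain e where e: "e \<in> x" and x'e: "x' = x - {e}" by auto
    have "(x - x') \<union> (x' - x) = {e}" using e x'e by auto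
    moreover have "x' \<in> cube n" using x e x'e unfolding cube_def by auto
    ultimately show ?thesis unfolding hdist_def by simp
  qed
qed

lemma adj_expand:
  assumes f: "f \<in> funs_on (ball_B n r)" and x: "x \<in> ball_B n r"
  shows "adj n r f x = (\<Sum>e\<in>{1..n} - x. f (insert e x)) + (\<Sum>e\<in>x. f (x - {e}))"
proof -
  have xc: "x \<in> cube n" using x ball_sub_cube by blast
  have fx: "finite x" using xc cube_finite by blast
  have "adj n r f x = (\<Sum>x'\<in>{x'\<in>ball_B n r. hdist x x' = 1}. f x')"
    using x unfolding adj_def by simp
  also have "\<dots> = (\<Sum>x'\<in>{x' \<in> cube n. hdist x x' = 1}. f x')"
    by (rule sum.mono_neutral_left) (use finite_cube ball_sub_cube f in \<open>auto simp: funs_on_def\<close>)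
  also have "\<dots> = (\<Sum>x'\<in>(\<lambda>e. insert e x) ` ({1..n} - x) \<union> (\<lambda>e. x - {e}) ` x. f x')"
    using nbrs[OF xc] by simp
  also have "\<dots> = (\<Sum>x'\<in>(\<lambda>e. insert e x) ` ({1..n} - x). f x') + (\<Sum>x'\<in>(\<lambda>e. x - {e}) ` x. f x')"
    by (rule sum.union_disjoint) (use fx in auto)
  also have "(\<Sum>x'\<in>(\<lambda>e. insert e x) ` ({1..n} - x). f x') = (\<Sum>e\<in>{1..n} - x. f (insert e x))"
    by (rule sum.reindex_cong[where l="\<lambda>e. insert e x"]) (auto simp: inj_on_def)
  also have "(\<Sum>x'\<in>(\<lambda>e. x - {e}) ` x. f x') = (\<Sum>e\<in>x. f (x - {e}))"
    by (rule sum.reindex_cong[where l="\<lambda>e. x - {e}"]) (auto simp: inj_on_def)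
  finally show ?thesis .
qed


definition aa :: "nat \<Rightarrow> nat \<Rightarrow> nat \<Rightarrow> nat \<Rightarrow> real" where
  "aa n t i k = bb (i - t) (n - i) k"

definition FF :: "nat \<Rightarrow> nat set \<Rightarrow> nat \<Rightarrow> nat set \<Rightarrow> real" where
  "FF n y i = (\<lambda>x. if x \<in> layer n i then aa n (card y) i (card (y - x)) else 0)"

lemma layerD: "x \<in> layer n i \<Longrightarrow> x \<subseteq> {1..n} \<and> finite x \<and> card x = i"
  unfolding layer_def cube_def using finite_subset by auto

lemma layerI: "x \<subseteq> {1..n} \<Longrightarrow> card x = i \<Longrightarrow> x \<in> layer n i"
  unfolding layer_def cube_def by auto

lemma D_sum:
  assumes y: "y \<subseteq> {1..n}" and x: "x \<in> layer n j"
  shows "(\<Sum>e\<in>{1..n} - x. FF n y (Suc j) (insert e x))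
    = real (card (y - x)) * aa n (card y) (Suc j) (card (y - x) - 1)
      + real (n - j - card (y - x)) * aa n (card y) (Suc j) (card (y - x))"
proof -
  have xs: "x \<subseteq> {1..n}" and fx: "finite x" and cx: "card x = j" using layerD[OF x] by auto
  have fy: "finite y" using y finite_subset by blast
  define k where "k = card (y - x)"
  have split: "{1..n} - x = (y - x) \<union> ({1..n} - x - y)" using y by blast
  have s1: "(\<Sum>e\<in>y - x. FF n y (Suc j) (insert e x)) = (\<Sum>e\<in>y - x. aa n (card y) (Suc j) (k - 1))"
  proof (rule sum.cong)
    fix e assume e: "e \<in> y - x"
    have "insert e x \<in> layer n (Suc j)" using e y xs fx cx by (intro layerI) auto
    moreover have "y - insert e x = (y - x) - {e}" by blast
    then have "card (y - insert e x) = k - 1" using e fy by (simp add: k_def)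
    ultimately show "FF n y (Suc j) (insert e x) = aa n (card y) (Suc j) (k - 1)"
      unfolding FF_def by simp
  qed simp
  have s2: "(\<Sum>e\<in>{1..n} - x - y. FF n y (Suc j) (insert e x)) = (\<Sum>e\<in>{1..n} - x - y. aa n (card y) (Suc j) k)"
  proof (rule sum.cong)
    fix e assume e: "e \<in> {1..n} - x - y"
    have "insert e x \<in> layer n (Suc j)" using e xs fx cx by (intro layerI) auto
    moreover have "y - insert e x = y - x" using e by blast
    ultimately show "FF n y (Suc j) (insert e x) = aa n (card y) (Suc j) k"
      unfolding FF_def k_def by simp
  qed simp
  have cU: "card (x \<union> y) = j + k"
  proof -
    have "x \<union> y = x \<union> (y - x)" by blast
    then show ?thesis using card_Un_disjoint[of x "y - x"] fx fy cx k_def by simp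
  qed
  have c2: "card ({1..n} - x - y) = n - j - k"
  proof -
    have "{1..n} - x - y = {1..n} - (x \<union> y)" by blast
    then show ?thesis using card_Diff_subset[of "x \<union> y" "{1..n}"] fx fy xs y cU by simp
  qed
  have "(\<Sum>e\<in>{1..n} - x. FF n y (Suc j) (insert e x))
     = (\<Sum>e\<in>y - x. FF n y (Suc j) (insert e x)) + (\<Sum>e\<in>{1..n} - x - y. FF n y (Suc j) (insert e x))"
  proof -
    have "(\<Sum>e\<in>(y - x) \<union> ({1..n} - x - y). FF n y (Suc j) (insert e x))
     = (\<Sum>e\<in>y - x. FF n y (Suc j) (insert e x)) + (\<Sum>e\<in>{1..n} - x - y. FF n y (Suc j) (insert e x))"
      by (rule sum.union_disjoint) (use fy in auto)
    then show ?thesis by (simp only: split[symmetric])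
  qed
  also have "\<dots> = real k * aa n (card y) (Suc j) (k - 1) + real (n - j - k) * aa n (card y) (Suc j) k"
    unfolding s1 s2 sum_constant c2 by (simp add: k_def[symmetric])
  finally show ?thesis unfolding k_def .
qed

lemma U_sum:
  assumes y: "y \<subseteq> {1..n}" and x: "x \<in> layer n (Suc i)"
  shows "(\<Sum>e\<in>x. FF n y i (x - {e}))
    = real (card (x \<inter> y)) * aa n (card y) i (Suc (card (y - x)))
      + real (card (x - y)) * aa n (card y) i (card (y - x))"
proof -
  have xs: "x \<subseteq> {1..n}" and fx: "finite x" and cx: "card x = Suc i" using layerD[OF x] by auto
  have fy: "finite y" using y finite_subset by blast
  define k where "k = card (y - x)"
  have split: "x = (x \<inter> y) \<union> (x - y)" by blast
  have s1: "(\<Sum>e\<in>x \<inter> y. FF n y i (x - {e})) = (\<Sum>e\<in>x \<inter> y. aa n (card y) i (Suc k))"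
  proof (rule sum.cong)
    fix e assume e: "e \<in> x \<inter> y"
    have "x - {e} \<in> layer n i" using e xs fx cx by (intro layerI) auto
    moreover have "y - (x - {e}) = insert e (y - x)" using e by blast
    then have "card (y - (x - {e})) = Suc k" using e fy by (simp add: k_def)
    ultimately show "FF n y i (x - {e}) = aa n (card y) i (Suc k)"
      unfolding FF_def by simp
  qed simp
  have s2: "(\<Sum>e\<in>x - y. FF n y i (x - {e})) = (\<Sum>e\<in>x - y. aa n (card y) i k)"
  proof (rule sum.cong)
    fix e assume e: "e \<in> x - y"
    have "x - {e} \<in> layer n i" using e xs fx cx by (intro layerI) auto
    moreover have "y - (x - {e}) = y - x" using e by blast
    ultimately show "FF n y i (x - {e}) = aa n (card y) i k"
      unfolding FF_def k_def by simp
  qed simp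
  have "(\<Sum>e\<in>x. FF n y i (x - {e}))
     = (\<Sum>e\<in>x \<inter> y. FF n y i (x - {e})) + (\<Sum>e\<in>x - y. FF n y i (x - {e}))"
  proof -
    have "(\<Sum>e\<in>(x \<inter> y) \<union> (x - y). FF n y i (x - {e}))
     = (\<Sum>e\<in>x \<inter> y. FF n y i (x - {e})) + (\<Sum>e\<in>x - y. FF n y i (x - {e}))"
      by (rule sum.union_disjoint) (use fx in auto)
    then show ?thesis by (simp only: split[symmetric])
  qed
  also have "\<dots> = real (card (x \<inter> y)) * aa n (card y) i (Suc k) + real (card (x - y)) * aa n (card y) i k"
    unfolding s1 s2 by simp
  finally show ?thesis unfolding k_def .
qed


lemma FF_funs: "FF n y i \<in> funs_on (layer n i)"
  unfolding funs_on_def FF_def by auto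

lemma FF_zero: "card x \<noteq> i \<Longrightarrow> FF n y i x = 0"
  unfolding FF_def layer_def by auto

lemma FF_zero': "x \<notin> layer n i \<Longrightarrow> FF n y i x = 0"
  unfolding FF_def by auto

lemma FF_funs_B: "i \<le> r \<Longrightarrow> FF n y i \<in> funs_on (ball_B n r)"
  using layer_sub_ball[of i r n] unfolding funs_on_def FF_def by auto

lemma ip_gz: "ip (layer n i) h (gz n i z) = (\<Sum>x\<in>{x\<in>layer n i. z \<subseteq> x}. h x)"
  unfolding ip_def gz_def by (simp add: sum.inter_filter[OF finite_layer] if_distrib cong: if_cong)

lemma dc:
  assumes zj: "card z \<le> j" and fz: "finite z"
  shows "real (Suc j - card z) * (\<Sum>x\<in>{x\<in>layer n (Suc j). z \<subseteq> x}. h x)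
       = (\<Sum>x'\<in>{x'\<in>layer n j. z \<subseteq> x'}. \<Sum>e\<in>{1..n} - x'. h (insert e x'))"
proof -
  define L1 where "L1 = {x\<in>layer n (Suc j). z \<subseteq> x}"
  define L0 where "L0 = {x'\<in>layer n j. z \<subseteq> x'}"
  have fL1: "finite L1" and fL0: "finite L0" unfolding L1_def L0_def using finite_layer by auto
  have "real (Suc j - card z) * (\<Sum>x\<in>L1. h x) = (\<Sum>x\<in>L1. \<Sum>e\<in>x - z. h x)"
    unfolding sum_distrib_left
  proof (rule sum.cong)
    fix x assume x: "x \<in> L1"
    then have "card (x - z) = Suc j - card z" using layerD[of x n "Suc j"] fz
      unfolding L1_def by (simp add: card_Diff_subset)
    then show "real (Suc j - card z) * h x = (\<Sum>e\<in>x - z. h x)" by simp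
  qed simp
  also have "\<dots> = (\<Sum>(x, e)\<in>(SIGMA x:L1. x - z). h x)"
    by (rule sum.Sigma) (use fL1 layerD in \<open>auto simp: L1_def\<close>)
  also have "\<dots> = (\<Sum>(x', e)\<in>(SIGMA x':L0. {1..n} - x'). h (insert e x'))"
  proof (rule sum.reindex_bij_witness[where i="\<lambda>(x, e). (insert e x, e)" and j="\<lambda>(x, e). (x - {e}, e)"])
    fix a assume "a \<in> (SIGMA x:L1. x - z)"
    then obtain x e where a: "a = (x, e)" "x \<in> L1" "e \<in> x - z" by auto
    have xl: "x \<subseteq> {1..n}" "finite x" "card x = Suc j" using a(2) layerD unfolding L1_def by auto
    show "(\<lambda>(x, e). (insert e x, e)) ((\<lambda>(x, e). (x - {e}, e)) a) = a" using a by auto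
    have "x - {e} \<in> layer n j" using xl a(3) by (intro layerI) (auto simp: card_Diff_singleton)
    then show "(\<lambda>(x, e). (x - {e}, e)) a \<in> (SIGMA x':L0. {1..n} - x')"
      using a xl unfolding L0_def L1_def by auto
  next
    fix b assume "b \<in> (SIGMA x':L0. {1..n} - x')"
    then obtain x e where b: "b = (x, e)" "x \<in> L0" "e \<in> {1..n} - x" by auto
    have xl: "x \<subseteq> {1..n}" "finite x" "card x = j" using b(2) layerD unfolding L0_def by auto
    show "(\<lambda>(x, e). (x - {e}, e)) ((\<lambda>(x, e). (insert e x, e)) b) = b" using b by auto
    have "insert e x \<in> layer n (Suc j)" using xl b(3) by (intro layerI) auto
    then show "(\<lambda>(x, e). (insert e x, e)) b \<in> (SIGMA x:L1. x - z)"
      using b xl unfolding L0_def L1_def by auto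
  qed (auto simp: insert_absorb)
  also have "\<dots> = (\<Sum>x'\<in>L0. \<Sum>e\<in>{1..n} - x'. h (insert e x'))"
    by (rule sum.Sigma[symmetric]) (use fL0 in auto)
  finally show ?thesis unfolding L0_def L1_def .
qed

definition ind :: "nat \<Rightarrow> nat \<Rightarrow> nat set \<Rightarrow> nat set \<Rightarrow> nat set \<Rightarrow> real" where
  "ind n i z u = (\<lambda>x. if x \<in> layer n i \<and> x \<inter> z = u then 1 else 0)"

lemma ind_in_U:
  assumes z: "z \<in> cube n" and u: "u \<subseteq> z"
  shows "ind n i z u \<in> U n i (card z)"
proof -
  have fz: "finite z" using z cube_finite by blast
  have "\<forall>u. u \<subseteq> z \<longrightarrow> card (z - u) = m \<longrightarrow> ind n i z u \<in> U n i (card z)" for m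
  proof (induction m rule: less_induct)
    case (less m)
    show ?case
    proof (intro allI impI)
      fix u assume u: "u \<subseteq> z" and m: "card (z - u) = m"
      define S where "S = {u'. u \<subset> u' \<and> u' \<subseteq> z}"
      have fS: "finite S" unfolding S_def by (rule finite_subset[of _ "Pow z"]) (use fz in auto)
      have eq: "ind n i z u = gz n i u - (\<Sum>u'\<in>S. ind n i z u')"
      proof
        fix x
        have s: "(\<Sum>u'\<in>S. ind n i z u') x = (if x \<in> layer n i \<and> x \<inter> z \<in> S then 1 else 0)"
          unfolding sum_fun_apply ind_def
          by (cases "x \<in> layer n i") (simp_all add: fS)
        show "ind n i z u x = (gz n i u - (\<Sum>u'\<in>S. ind n i z u')) x"
          unfolding minus_apply s using u unfolding ind_def gz_def S_def by auto
      qed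
      have uc: "u \<in> cube n" using u z unfolding cube_def by auto
      have cu: "card u \<le> card z" using u fz by (rule card_mono[rotated])
      have "gz n i u \<in> U n i (card z)"
        unfolding U_def by (rule fvs.span_base) (use uc cu in blast)
      moreover have IH: "ind n i z u' \<in> U n i (card z)" if u': "u' \<in> S" for u'
      proof -
        from u' have "z - u' \<subset> z - u" unfolding S_def by blast
        then have "card (z - u') < m" unfolding m[symmetric] using fz by (intro psubset_card_mono) auto
        then show ?thesis using less u' unfolding S_def by blast
      qed
      have "(\<Sum>u'\<in>S. ind n i z u') \<in> U n i (card z)"
        using IH unfolding U_def by (intro fvs.span_sum) auto
      ultimately show "ind n i z u \<in> U n i (card z)"
        unfolding eq U_def by (rule fvs.span_diff)
    qed
  qed
  then show ?thesis using u by blast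
qed

lemma sym_in_U:
  assumes z: "z \<in> cube n" and h: "h \<in> funs_on (layer n i)"
    and sym: "\<forall>x\<in>layer n i. \<forall>x'\<in>layer n i. x \<inter> z = x' \<inter> z \<longrightarrow> h x = h x'"
  shows "h \<in> U n i (card z)"
proof -
  have fz: "finite z" using z cube_finite by blast
  define c where "c u = h (SOME x. x \<in> layer n i \<and> x \<inter> z = u)" for u
  have eq: "h = (\<Sum>u\<in>Pow z. fscale (c u) (ind n i z u))"
  proof
    fix x
    show "h x = (\<Sum>u\<in>Pow z. fscale (c u) (ind n i z u)) x"
    proof (cases "x \<in> layer n i")
      case True
      have "(\<Sum>u\<in>Pow z. fscale (c u) (ind n i z u)) x = (\<Sum>u\<in>Pow z. if x \<inter> z = u then c u else 0)"
        unfolding sum_fun_apply fscale_def ind_def using True by (intro sum.cong) auto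
      also have "\<dots> = c (x \<inter> z)" using fz by simp
      also have "\<dots> = h x"
      proof -
        have ex: "\<exists>x'. x' \<in> layer n i \<and> x' \<inter> z = x \<inter> z" using True by blast
        have "(SOME x'. x' \<in> layer n i \<and> x' \<inter> z = x \<inter> z) \<in> layer n i \<and> (SOME x'. x' \<in> layer n i \<and> x' \<inter> z = x \<inter> z) \<inter> z = x \<inter> z"
          by (rule someI_ex[OF ex])
        then show ?thesis unfolding c_def using sym True by blast
      qed
      finally show ?thesis by simp
    next
      case False
      then show ?thesis using h unfolding funs_on_def sum_fun_apply fscale_def ind_def by simp
    qed
  qed
  show ?thesis unfolding eq U_def
    by (intro fvs.span_sum fvs.span_scale ind_in_U[OF z, unfolded U_def]) auto
qed

lemma subspace_ip: "fvs.subspace {g. ip X f g = 0}"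
  unfolding fvs.subspace_def ip_def fscale_def
  by (auto simp: sum.distrib distrib_left sum_distrib_left[symmetric] mult.left_commute)

lemma subspace_ip1: "fvs.subspace {f. ip X f g = 0}"
  unfolding fvs.subspace_def ip_def fscale_def
  by (auto simp: sum.distrib distrib_right sum_distrib_left[symmetric] mult.assoc)

lemma U_mono: "a \<le> b \<Longrightarrow> U n i a \<subseteq> U n i b"
  unfolding U_def by (rule fvs.span_mono) auto

lemma vanish:
  assumes y: "y \<in> cube n" and h: "h \<in> funs_on (layer n i)"
    and sym: "\<forall>x\<in>layer n i. \<forall>x'\<in>layer n i. hdist x y = hdist x' y \<longrightarrow> h x = h x'"
    and orth: "\<forall>z\<in>cube n. card z < card y \<longrightarrow> (\<Sum>x\<in>{x\<in>layer n i. z \<subseteq> x}. h x) = 0"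
    and top: "\<forall>x\<in>layer n i. y \<subseteq> x \<longrightarrow> h x = 0"
  shows "h = 0"
proof -
  have fy: "finite y" using y cube_finite by blast
  have main: "\<forall>x. x \<in> layer n i \<longrightarrow> card (y - x) = k \<longrightarrow> h x = 0" for k
  proof (induction k rule: less_induct)
    case (less k)
    show ?case
    proof (intro allI impI)
      fix x assume x: "x \<in> layer n i" and k: "card (y - x) = k"
      have xs: "x \<subseteq> {1..n}" and fx: "finite x" and cx: "card x = i" using layerD[OF x] by auto
      show "h x = 0"
      proof (cases "k = 0")
        case True
        then have "y \<subseteq> x" using k fy by auto
        then show ?thesis using top x by blast
      next
        case False
        obtain w where w: "w \<subseteq> x - y" "card w = min (k - 1) (card (x - y))" "finite w"
          using obtain_subset_with_card_n[of "min (k - 1) (card (x - y))" "x - y"] by auto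
        define z where "z = (x \<inter> y) \<union> w"
        have zx: "z \<subseteq> x" using w unfolding z_def by blast
        have zc: "z \<in> cube n" using zx xs unfolding cube_def by auto
        have c1: "k + card (x \<inter> y) = card y" using card_diff_int[OF fy, of x] k by simp
        have "card z = card (x \<inter> y) + card w"
          unfolding z_def by (rule card_Un_disjoint) (use fx w in auto)
        then have zt: "card z < card y" using c1 w(2) False by linarith
        have zy: "z \<inter> y = x \<inter> y" using w unfolding z_def by blast
        define F where "F = {x'\<in>layer n i. z \<subseteq> x'}"
        have fF: "finite F" unfolding F_def using finite_layer by simp
        have hF: "h x' = (if x' \<inter> y = x \<inter> y then h x else 0)" if x': "x' \<in> F" for x'
        proof (cases "x' \<inter> y = x \<inter> y")
          case True
          have x'l: "x' \<in> layer n i" using x' unfolding F_def by simp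
          have "hdist x' y = hdist x y"
            using hdist_card[of x' y] hdist_card[of x y] layerD[OF x'l] layerD[OF x] fy True by simp
          then have "h x' = h x" using sym x'l x by blast
          then show ?thesis using True by simp
        next
          case False
          have x'l: "x' \<in> layer n i" and zx': "z \<subseteq> x'" using x' unfolding F_def by auto
          have sub: "y - x' \<subseteq> y - x" using zx' zy by blast
          have ne: "y - x' \<noteq> y - x"
          proof
            assume eq: "y - x' = y - x"
            have "x' \<inter> y = y - (y - x')" by blast
            also have "\<dots> = y - (y - x)" using eq by simp
            also have "\<dots> = x \<inter> y" by blast
            finally show False using False by simp
          qed
          have "y - x' \<subset> y - x" using sub ne by blast
          then have "card (y - x') < card (y - x)" by (rule psubset_card_mono[rotated]) (use fy in simp)
          then have "card (y - x') < k" using k by simp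
          then show ?thesis using less x'l False by auto
        qed
        have "0 = (\<Sum>x'\<in>F. h x')" using orth zc zt unfolding F_def by simp
        also have "\<dots> = (\<Sum>x'\<in>F. if x' \<inter> y = x \<inter> y then h x else 0)" using hF by (rule sum.cong[OF refl])
        also have "\<dots> = real (card {x'\<in>F. x' \<inter> y = x \<inter> y}) * h x"
          using fF by (simp add: sum.inter_filter[symmetric])
        finally have "real (card {x'\<in>F. x' \<inter> y = x \<inter> y}) * h x = 0" by simp
        moreover have "card {x'\<in>F. x' \<inter> y = x \<inter> y} \<noteq> 0"
        proof -
          have "x \<in> {x'\<in>F. x' \<inter> y = x \<inter> y}" using x zx unfolding F_def by simp
          then show ?thesis using fF by (auto simp: card_eq_0_iff)
        qed
        ultimately show ?thesis by simp
      qed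
    qed
  qed
  show ?thesis
  proof
    fix x show "h x = 0 x"
      using main h unfolding funs_on_def by (cases "x \<in> layer n i") auto
  qed
qed

definition pp :: "nat \<Rightarrow> nat set \<Rightarrow> nat \<Rightarrow> nat set" where
  "pp n y i = (SOME p. p \<in> layer n i \<and> y \<subseteq> p)"

lemma restr_funs: "(\<lambda>x. if x \<in> layer n i then g x else 0) \<in> funs_on (layer n i)"
  unfolding funs_on_def by simp

lemma ip_restrict:
  assumes f: "f \<in> funs_on (layer n i)" and ir: "i \<le> r"
  shows "ip (ball_B n r) f g = ip (layer n i) f (\<lambda>x. if x \<in> layer n i then g x else 0)"
proof -
  have "ip (ball_B n r) f g = (\<Sum>x\<in>layer n i. f x * g x)"
    unfolding ip_def
    by (rule sum.mono_neutral_right) (use finite_ball[of n r] layer_sub_ball[OF ir, of n] f in \<open>auto simp: funs_on_def\<close>)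
  then show ?thesis unfolding ip_def by simp
qed

lemma gz_in_SB:
  assumes z: "z \<in> cube n" and ir: "i \<le> r"
  shows "gz n i z \<in> SB n r z"
  unfolding SB_def
proof (intro CollectI conjI ballI impI)
  show "gz n i z \<in> funs_on (ball_B n r)"
    using layer_sub_ball[OF ir] unfolding funs_on_def gz_def by auto
  fix x x' assume x: "x \<in> ball_B n r" and x': "x' \<in> ball_B n r"
    and h: "card x = card x' \<and> hdist x z = hdist x' z"
  have fz: "finite z" using z cube_finite by blast
  have fx: "finite x" and fx': "finite x'" using x x' ball_sub_cube cube_finite by blast+
  have ci: "card (x \<inter> z) = card (x' \<inter> z)"
    using hdist_card[OF fx fz] hdist_card[OF fx' fz] h by simp
  have sub: "z \<subseteq> v \<longleftrightarrow> card (v \<inter> z) = card z" if fv: "finite v" for v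
  proof
    assume "z \<subseteq> v" then have "v \<inter> z = z" by blast
    then show "card (v \<inter> z) = card z" by simp
  next
    assume c: "card (v \<inter> z) = card z"
    have "v \<inter> z = z" by (rule card_subset_eq[OF fz]) (use c in auto)
    then show "z \<subseteq> v" by blast
  qed
  have "z \<subseteq> x \<longleftrightarrow> z \<subseteq> x'" using sub[OF fx] sub[OF fx'] ci by simp
  moreover have "x \<in> layer n i \<longleftrightarrow> x' \<in> layer n i"
    using x x' h ball_sub_cube unfolding layer_def by auto
  ultimately show "gz n i z x = gz n i z x'" unfolding gz_def by simp
qed

lemma SB_restr_in_U:
  assumes z: "z \<in> ball_B n r" and g: "g \<in> SB n r z" and ir: "i \<le> r"
  shows "(\<lambda>x. if x \<in> layer n i then g x else 0) \<in> U n i (card z)"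
proof -
  have zc: "z \<in> cube n" using z ball_sub_cube by blast
  show ?thesis
proof (rule sym_in_U[OF zc restr_funs], intro ballI impI)
  have fz: "finite z" using zc cube_finite by blast
  fix x x' assume x: "x \<in> layer n i" and x': "x' \<in> layer n i" and e: "x \<inter> z = x' \<inter> z"
  have "hdist x z = hdist x' z"
    using hdist_card[OF _ fz, of x] hdist_card[OF _ fz, of x'] layerD[OF x] layerD[OF x'] e by simp
  moreover have "x \<in> ball_B n r" "x' \<in> ball_B n r" using x x' layer_sub_ball[OF ir] by blast+
  moreover have "card x = card x'" using layerD[OF x] layerD[OF x'] by simp
  ultimately have "g x = g x'" using g unfolding SB_def by blast
  then show "(if x \<in> layer n i then g x else 0) = (if x' \<in> layer n i then g x' else 0)" using x x' by simp
qed
qed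

lemma SB_iff: "f \<in> SB n r z \<longleftrightarrow> (\<forall>x. x \<notin> ball_B n r \<longrightarrow> f x = 0) \<and>
   (\<forall>x\<in>ball_B n r. \<forall>x'\<in>ball_B n r. card x = card x' \<and> hdist x z = hdist x' z \<longrightarrow> f x = f x')"
  unfolding SB_def funs_on_def by simp

lemma subspace_SB: "fvs.subspace (SB n r z)"
proof (rule fvs.subspaceI)
  show "0 \<in> SB n r z" unfolding SB_iff by simp
next
  fix f g assume f: "f \<in> SB n r z" and g: "g \<in> SB n r z"
  show "f + g \<in> SB n r z" unfolding SB_iff
  proof (intro conjI allI impI ballI)
    fix x assume "x \<notin> ball_B n r"
    then show "(f + g) x = 0" using f g unfolding SB_iff by simp
  next
    fix x x' assume a: "x \<in> ball_B n r" "x' \<in> ball_B n r" "card x = card x' \<and> hdist x z = hdist x' z"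
    then have "f x = f x'" "g x = g x'" using f g unfolding SB_iff by blast+
    then show "(f + g) x = (f + g) x'" by simp
  qed
next
  fix c f assume f: "f \<in> SB n r z"
  show "fscale c f \<in> SB n r z" unfolding SB_iff
  proof (intro conjI allI impI ballI)
    fix x assume "x \<notin> ball_B n r"
    then show "fscale c f x = 0" using f unfolding SB_iff fscale_def by simp
  next
    fix x x' assume a: "x \<in> ball_B n r" "x' \<in> ball_B n r" "card x = card x' \<and> hdist x z = hdist x' z"
    then have "f x = f x'" using f unfolding SB_iff by blast
    then show "fscale c f x = fscale c f x'" unfolding fscale_def by simp
  qed
qed

lemma subspace_orth: "fvs.subspace (orth X G)"
proof (rule fvs.subspaceI)
  show "0 \<in> orth X G" unfolding orth_def funs_on_def ip_def by simp
next
  fix f g assume f: "f \<in> orth X G" and g: "g \<in> orth X G"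
  show "f + g \<in> orth X G" unfolding orth_def
  proof (intro CollectI conjI ballI)
    show "f + g \<in> funs_on X" using f g unfolding orth_def funs_on_def by simp
    fix h assume "h \<in> G"
    then have "ip X f h = 0" "ip X g h = 0" using f g unfolding orth_def by blast+
    then show "ip X (f + g) h = 0" unfolding ip_def by (simp add: distrib_right sum.distrib)
  qed
next
  fix c f assume f: "f \<in> orth X G"
  show "fscale c f \<in> orth X G" unfolding orth_def
  proof (intro CollectI conjI ballI)
    show "fscale c f \<in> funs_on X" using f unfolding orth_def funs_on_def fscale_def by simp
    fix h assume "h \<in> G"
    then have "ip X f h = 0" using f unfolding orth_def by blast
    then show "ip X (fscale c f) h = 0" unfolding ip_def fscale_def
      by (simp add: mult.assoc sum_distrib_left[symmetric])
  qed
qed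

lemma subspace_W: "fvs.subspace (W n r y)"
  unfolding W_def by (intro fvs.subspace_inter subspace_SB subspace_orth)

context
  fixes n r :: nat and y :: "nat set"
  assumes rn: "2 * r \<le> n" and yB: "y \<in> ball_B n r"
begin

lemma y_sub: "y \<subseteq> {1..n}"
  using yB unfolding ball_B_def cube_def by auto

lemma y_fin: "finite y"
  using y_sub finite_subset by blast

lemma y_cube: "y \<in> cube n"
  using yB ball_sub_cube by blast

lemma t_le_r: "card y \<le> r"
  using yB unfolding ball_B_def by auto

lemma k_le_t: "card (y - x) \<le> card y"
  using y_fin by (simp add: card_mono)

lemma D_FF:
  assumes ij: "card y \<le> j" "Suc j \<le> r" and x: "x \<in> layer n j"
  shows "(\<Sum>e\<in>{1..n} - x. FF n y (Suc j) (insert e x)) = real (n - j) * FF n y j x"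
proof -
  define k where "k = card (y - x)"
  define N where "N = n - Suc j"
  define m where "m = j - card y"
  have kt: "k \<le> card y" unfolding k_def by (rule k_le_t)
  have kN: "k \<le> N" using kt ij t_le_r rn unfolding N_def by linarith
  have e1: "Suc j - card y = Suc m" "n - Suc j = N" "j - card y = m" "n - j = Suc N"
    using ij t_le_r rn unfolding m_def N_def by auto
  have e2: "real (Suc N - k) = real N + 1 - real k" using kN by (simp add: of_nat_diff)
  have "(\<Sum>e\<in>{1..n} - x. FF n y (Suc j) (insert e x))
      = real k * bb (Suc m) N (k - 1) + (real N + 1 - real k) * bb (Suc m) N k"
    using D_sum[OF y_sub x] unfolding k_def[symmetric] aa_def e1 e2 .
  also have "\<dots> = (real N + 1) * bb m (Suc N) k" by (rule bbD1[OF kN])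
  also have "\<dots> = real (n - j) * FF n y j x"
    using x unfolding FF_def aa_def e1 k_def by simp
  finally show ?thesis .
qed

lemma D0_FF:
  assumes t1: "1 \<le> card y" and x: "x \<in> layer n (card y - 1)"
  shows "(\<Sum>e\<in>{1..n} - x. FF n y (card y) (insert e x)) = 0"
proof -
  define k where "k = card (y - x)"
  define N where "N = n - card y"
  have kt: "k \<le> card y" unfolding k_def by (rule k_le_t)
  have kN: "k \<le> N" using kt t_le_r rn unfolding N_def by linarith
  have "k \<noteq> 0"
  proof
    assume "k = 0"
    then have "y \<subseteq> x" using y_fin unfolding k_def by auto
    then have "card y \<le> card x" using layerD[OF x] by (intro card_mono) auto
    then show False using layerD[OF x] t1 by simp
  qed
  then obtain j' where kj: "k = Suc j'" by (cases k) auto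
  have e1: "Suc (card y - 1) = card y" "card y - card y = 0" "n - card y = N" using t1 unfolding N_def by auto
  have e2: "real (n - (card y - 1) - k) = real N + 1 - real k" using kN t1 t_le_r rn unfolding N_def
    by (simp add: of_nat_diff)
  have "(\<Sum>e\<in>{1..n} - x. FF n y (card y) (insert e x))
      = real k * bb 0 N (k - 1) + (real N + 1 - real k) * bb 0 N k"
    using D_sum[OF y_sub x] unfolding k_def[symmetric] e2 aa_def e1 .
  also have "\<dots> = 0" unfolding kj diff_Suc_1 by (rule bbD0) (use kN kj in simp)
  finally show ?thesis .
qed

lemma U_FF:
  assumes ij: "card y \<le> i" "Suc i \<le> r" and x: "x \<in> layer n (Suc i)"
  shows "(\<Sum>e\<in>x. FF n y i (x - {e})) = gamma n (card y) i * FF n y (Suc i) x"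
proof -
  define k where "k = card (y - x)"
  define N where "N = n - i"
  define m where "m = i - card y"
  have kt: "k \<le> card y" unfolding k_def by (rule k_le_t)
  have tN: "card y + 1 \<le> N" using ij t_le_r rn unfolding N_def by linarith
  have c1: "k + card (x \<inter> y) = card y" unfolding k_def by (rule card_diff_int[OF y_fin])
  have c2: "card (x - y) + card (x \<inter> y) = Suc i"
    using card_diff_int[of x y] layerD[OF x] by (simp add: Int_commute)
  have r1: "real (card (x \<inter> y)) = real (card y) - real k" using c1 by linarith
  have r2: "real (card (x - y)) = real m + 1 + real k" using c1 c2 ij unfolding m_def by linarith
  have e1: "i - card y = m" "n - i = N" "Suc i - card y = Suc m" "n - Suc i = N - 1"
    using ij unfolding m_def N_def by auto
  have g: "gamma n (card y) i = (real m + 1) * (real N - real (card y)) / real N"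
    unfolding gamma_def using ij tN unfolding m_def N_def by (simp add: of_nat_diff)
  have "(\<Sum>e\<in>x. FF n y i (x - {e}))
      = (real (card y) - real k) * bb m N (Suc k) + (real m + 1 + real k) * bb m N k"
    using U_sum[OF y_sub x] unfolding k_def[symmetric] r1 r2 aa_def e1 .
  also have "\<dots> = ((real m + 1) * (real N - real (card y)) / real N) * bb (Suc m) (N - 1) k"
    by (rule bbU[OF kt tN])
  also have "\<dots> = gamma n (card y) i * FF n y (Suc i) x"
    using x unfolding g FF_def aa_def e1 k_def by simp
  finally show ?thesis .
qed


lemma adj_FF:
  assumes ti: "card y \<le> i" and ir: "i \<le> r"
  shows "adj n r (FF n y i) x = (if card y < i then beta n i * FF n y (i - 1) x else 0)
     + (if i < r then gamma n (card y) i * FF n y (i + 1) x else 0)"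
proof (cases "x \<in> ball_B n r")
  case False
  have "i - 1 \<le> r" using ir by simp
  then have "x \<notin> layer n (i - 1)" using False layer_sub_ball[of "i - 1" r n] by blast
  moreover have "i < r \<Longrightarrow> x \<notin> layer n (i + 1)" using False layer_sub_ball[of "i + 1" r n] by auto
  ultimately show ?thesis using False unfolding adj_def by (simp add: FF_zero')
next
  case True
  define c where "c = card x"
  have xs: "x \<subseteq> {1..n}" and fx: "finite x" and cr: "c \<le> r"
    using True unfolding ball_B_def cube_def c_def by (auto intro: finite_subset)
  have xl: "x \<in> layer n c" using xs unfolding c_def by (intro layerI) auto
  have S1z: "Suc c \<noteq> i \<Longrightarrow> (\<Sum>e\<in>{1..n} - x. FF n y i (insert e x)) = 0"
    by (rule sum.neutral) (use fx in \<open>auto simp: c_def intro!: FF_zero\<close>)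
  have S2z: "c \<noteq> Suc i \<Longrightarrow> (\<Sum>e\<in>x. FF n y i (x - {e})) = 0"
  proof (rule sum.neutral, rule ballI)
    fix e assume "c \<noteq> Suc i" "e \<in> x"
    moreover have "card x > 0" using fx \<open>e \<in> x\<close> card_gt_0_iff by blast
    ultimately have "card (x - {e}) \<noteq> i" using fx unfolding c_def by (simp add: card_Diff_singleton)
    then show "FF n y i (x - {e}) = 0" by (rule FF_zero)
  qed
  have adj: "adj n r (FF n y i) x = (\<Sum>e\<in>{1..n} - x. FF n y i (insert e x)) + (\<Sum>e\<in>x. FF n y i (x - {e}))"
    by (rule adj_expand[OF FF_funs_B[OF ir] True])
  consider (A) "Suc c = i" | (B) "c = Suc i" | (C) "Suc c \<noteq> i" "c \<noteq> Suc i" by blast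
  then show ?thesis
  proof cases
    case A
    have z2: "FF n y (i + 1) x = 0" using A by (intro FF_zero) (simp add: c_def)
    show ?thesis
    proof (cases "card y < i")
      case True
      have "(\<Sum>e\<in>{1..n} - x. FF n y i (insert e x)) = real (n - c) * FF n y c x"
        unfolding A[symmetric] by (rule D_FF) (use True A ir xl in auto)
      moreover have "beta n i = real (n - c)" using A ir rn unfolding beta_def by (simp add: of_nat_diff)
      moreover have "i - 1 = c" using A by simp
      ultimately show ?thesis using True A S2z z2 adj by simp
    next
      case False
      then have "i = card y" using ti by simp
      moreover have "card y - 1 = c" using A \<open>i = card y\<close> by simp
      ultimately have "(\<Sum>e\<in>{1..n} - x. FF n y i (insert e x)) = 0"
        using D0_FF[of x] A xl by simp
      then show ?thesis using False A S2z z2 adj by simp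
    qed
  next
    case B
    have z1: "FF n y (i - 1) x = 0" using B by (intro FF_zero) (simp add: c_def)
    have ir': "i < r" using B cr by simp
    have "(\<Sum>e\<in>x. FF n y i (x - {e})) = gamma n (card y) i * FF n y (Suc i) x"
      by (rule U_FF) (use B ti cr xl in auto)
    then show ?thesis using B S1z z1 ir' adj by simp
  next
    case C
    have z2: "FF n y (i + 1) x = 0" using C by (intro FF_zero) (simp add: c_def)
    have z1: "card y < i \<Longrightarrow> FF n y (i - 1) x = 0" using C by (intro FF_zero) (auto simp: c_def)
    show ?thesis using C S1z S2z z1 z2 adj by simp
  qed
qed


lemma FF_orth_gz:
  assumes ti: "card y \<le> i" and ir: "i \<le> r" and z: "z \<in> cube n" and zt: "card z < card y"
  shows "(\<Sum>x\<in>{x\<in>layer n i. z \<subseteq> x}. FF n y i x) = 0"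
proof -
  have fz: "finite z" using z cube_finite by blast
  have "\<forall>d. card y + d \<le> r \<longrightarrow> (\<Sum>x\<in>{x\<in>layer n (card y + d). z \<subseteq> x}. FF n y (card y + d) x) = 0"
  proof
    fix d show "card y + d \<le> r \<longrightarrow> (\<Sum>x\<in>{x\<in>layer n (card y + d). z \<subseteq> x}. FF n y (card y + d) x) = 0"
    proof (induction d)
      case 0
      define j where "j = card y - 1"
      have sj: "Suc j = card y" using zt unfolding j_def by simp
      have "real (Suc j - card z) * (\<Sum>x\<in>{x\<in>layer n (Suc j). z \<subseteq> x}. FF n y (Suc j) x)
          = (\<Sum>x'\<in>{x'\<in>layer n j. z \<subseteq> x'}. \<Sum>e\<in>{1..n} - x'. FF n y (Suc j) (insert e x'))"
        by (rule dc) (use zt sj fz in auto)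
      also have "\<dots> = 0"
        by (rule sum.neutral) (use D0_FF zt sj in \<open>auto simp: j_def\<close>)
      finally show ?case using zt sj by simp
    next
      case (Suc d)
      show ?case
      proof
        assume le: "card y + Suc d \<le> r"
        define j where "j = card y + d"
        have "real (Suc j - card z) * (\<Sum>x\<in>{x\<in>layer n (Suc j). z \<subseteq> x}. FF n y (Suc j) x)
          = (\<Sum>x'\<in>{x'\<in>layer n j. z \<subseteq> x'}. \<Sum>e\<in>{1..n} - x'. FF n y (Suc j) (insert e x'))"
          by (rule dc) (use zt fz in \<open>auto simp: j_def\<close>)
        also have "\<dots> = (\<Sum>x'\<in>{x'\<in>layer n j. z \<subseteq> x'}. real (n - j) * FF n y j x')"
          by (rule sum.cong) (use D_FF le in \<open>auto simp: j_def\<close>)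
        also have "\<dots> = 0" unfolding sum_distrib_left[symmetric] using Suc.IH le by (simp add: j_def)
        finally show "(\<Sum>x\<in>{x\<in>layer n (card y + Suc d). z \<subseteq> x}. FF n y (card y + Suc d) x) = 0"
          using zt by (simp add: j_def)
      qed
    qed
  qed
  moreover obtain d where "i = card y + d" using ti le_Suc_ex by blast
  ultimately show ?thesis using ir by blast
qed


lemma FF_orth_U:
  assumes t1: "1 \<le> card y" and ti: "card y \<le> i" and ir: "i \<le> r" and g: "g \<in> U n i (card y - 1)"
  shows "ip (layer n i) (FF n y i) g = 0"
proof -
  have "U n i (card y - 1) \<subseteq> {g. ip (layer n i) (FF n y i) g = 0}"
    unfolding U_def
  proof (rule fvs.span_minimal[OF _ subspace_ip], rule subsetI)
    fix g assume "g \<in> {gz n i z |z. z \<in> cube n \<and> card z \<le> card y - 1}"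
    then obtain z where z: "g = gz n i z" "z \<in> cube n" "card z \<le> card y - 1" by blast
    have "card z < card y" using z(3) t1 by linarith
    then show "g \<in> {g. ip (layer n i) (FF n y i) g = 0}"
      using FF_orth_gz[OF ti ir z(2)] by (simp add: z(1) ip_gz)
  qed
  then show ?thesis using g by blast
qed

lemma FF_hdist_sym:
  assumes x: "x \<in> layer n i" and x': "x' \<in> layer n i" and h: "hdist x y = hdist x' y"
  shows "FF n y i x = FF n y i x'"
proof -
  have "card (x \<inter> y) = card (x' \<inter> y)"
    using hdist_card[of x y] hdist_card[of x' y] layerD[OF x] layerD[OF x'] y_fin h by simp
  then have "card (y - x) = card (y - x')"
    using card_diff_int[OF y_fin, of x] card_diff_int[OF y_fin, of x'] by simp
  then show ?thesis unfolding FF_def using x x' by simp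
qed

lemma FF_in_U: "FF n y i \<in> U n i (card y)"
proof (rule sym_in_U[OF y_cube FF_funs], intro ballI impI)
  fix x x' assume "x \<in> layer n i" "x' \<in> layer n i" "x \<inter> y = x' \<inter> y"
  moreover have "y - x = y - (x \<inter> y)" "y - x' = y - (x' \<inter> y)" by blast+
  ultimately show "FF n y i x = FF n y i x'" unfolding FF_def by simp
qed

lemma FF_top: "x \<in> layer n i \<Longrightarrow> y \<subseteq> x \<Longrightarrow> FF n y i x = 1"
proof -
  assume a: "x \<in> layer n i" "y \<subseteq> x"
  then have e: "y - x = {}" by blast
  have c0: "card (y - x) = 0" by (simp only: e card.empty)
  have "FF n y i x = bb (i - card y) (n - i) (card (y - x))" using a unfolding FF_def aa_def by simp
  then show ?thesis unfolding c0 bb0 .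
qed

lemma FF_is_fy:
  assumes ti: "card y \<le> i" and ir: "i \<le> r"
  shows "is_fy n y i (FF n y i)"
proof -
  have V: "FF n y i \<in> V n i (card y)"
  proof (cases "card y = 0")
    case True
    then show ?thesis using FF_in_U[of i] unfolding V_def by simp
  next
    case False
    have "FF n y i \<in> orth (layer n i) (U n i (card y - 1))"
      unfolding orth_def using FF_funs FF_orth_U[OF _ ti ir] False by auto
    then show ?thesis using FF_in_U[of i] False unfolding V_def by simp
  qed
  have S: "\<forall>x\<in>layer n i. \<forall>x'\<in>layer n i. hdist x y = hdist x' y \<longrightarrow> FF n y i x = FF n y i x'"
    using FF_hdist_sym by blast
  have Vy: "FF n y i \<in> Vy n y i" unfolding Vy_def using V S by (rule CollectI[of _ "FF n y i", OF conjI])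
  have T: "\<forall>x\<in>layer n i. y \<subseteq> x \<longrightarrow> FF n y i x = 1" using FF_top by blast
  show ?thesis unfolding is_fy_def using FF_funs Vy T by (intro conjI)
qed

lemma is_fy_unique:
  assumes ti: "card y \<le> i" and ir: "i \<le> r" and g: "is_fy n y i g"
  shows "g = FF n y i"
proof -
  have gf: "g \<in> funs_on (layer n i)" and gV: "g \<in> V n i (card y)"
    and gs: "\<forall>x\<in>layer n i. \<forall>x'\<in>layer n i. hdist x y = hdist x' y \<longrightarrow> g x = g x'"
    and gt: "\<forall>x\<in>layer n i. y \<subseteq> x \<longrightarrow> g x = 1"
  proof -
    have a: "g \<in> funs_on (layer n i)" "g \<in> Vy n y i" "\<forall>x\<in>layer n i. y \<subseteq> x \<longrightarrow> g x = 1"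
      using g unfolding is_fy_def by blast+
    have "g \<in> V n i (card y) \<and> (\<forall>x\<in>layer n i. \<forall>x'\<in>layer n i. hdist x y = hdist x' y \<longrightarrow> g x = g x')"
      using a(2) unfolding Vy_def mem_Collect_eq .
    then show "g \<in> funs_on (layer n i)" "g \<in> V n i (card y)"
      "\<forall>x\<in>layer n i. \<forall>x'\<in>layer n i. hdist x y = hdist x' y \<longrightarrow> g x = g x'"
      "\<forall>x\<in>layer n i. y \<subseteq> x \<longrightarrow> g x = 1" using a by blast+
  qed
  have "g - FF n y i = 0"
  proof (rule vanish[OF y_cube])
    show "g - FF n y i \<in> funs_on (layer n i)" using gf FF_funs unfolding funs_on_def by simp
    show "\<forall>x\<in>layer n i. \<forall>x'\<in>layer n i. hdist x y = hdist x' y \<longrightarrow> (g - FF n y i) x = (g - FF n y i) x'"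
    proof (intro ballI impI)
      fix x x' assume "x \<in> layer n i" "x' \<in> layer n i" "hdist x y = hdist x' y"
      moreover from this have "g x = g x'" using gs by blast
      ultimately show "(g - FF n y i) x = (g - FF n y i) x'" using FF_hdist_sym[of x i x'] by simp
    qed
    show "\<forall>x\<in>layer n i. y \<subseteq> x \<longrightarrow> (g - FF n y i) x = 0" using gt FF_top by simp
    show "\<forall>z\<in>cube n. card z < card y \<longrightarrow> (\<Sum>x\<in>{x \<in> layer n i. z \<subseteq> x}. (g - FF n y i) x) = 0"
    proof (intro ballI impI)
      fix z assume z: "z \<in> cube n" and zt: "card z < card y"
      have t0: "card y \<noteq> 0" using zt by simp
      have "card z \<le> card y - 1" using zt by linarith
      then have "gz n i z \<in> U n i (card y - 1)"
        unfolding U_def by (intro fvs.span_base) (use z in blast)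
      moreover have "\<forall>g'\<in>U n i (card y - 1). ip (layer n i) g g' = 0"
        using gV t0 unfolding V_def orth_def by simp
      ultimately have "ip (layer n i) g (gz n i z) = 0" by blast
      then have "(\<Sum>x\<in>{x \<in> layer n i. z \<subseteq> x}. g x) = 0" unfolding ip_gz .
      then show "(\<Sum>x\<in>{x \<in> layer n i. z \<subseteq> x}. (g - FF n y i) x) = 0"
        using FF_orth_gz[OF ti ir z zt] by (simp add: sum_subtractf)
    qed
  qed
  then show ?thesis by simp
qed

lemma fy_eq:
  assumes ti: "card y \<le> i" and ir: "i \<le> r"
  shows "fy n y i = FF n y i" and "\<exists>!f. is_fy n y i f"
proof -
  show "\<exists>!f. is_fy n y i f" using FF_is_fy[OF ti ir] is_fy_unique[OF ti ir] by blast
  from the1_equality[of "is_fy n y i", OF this FF_is_fy[OF ti ir]] show "fy n y i = FF n y i" unfolding fy_def .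
qed


lemma pp_prop:
  assumes ti: "card y \<le> i" and ir: "i \<le> r"
  shows "pp n y i \<in> layer n i \<and> y \<subseteq> pp n y i"
proof -
  have "card ({1..n} - y) = n - card y" using y_sub by (simp add: card_Diff_subset y_fin)
  moreover have "i - card y \<le> n - card y" using ir rn by linarith
  ultimately obtain S where S: "S \<subseteq> {1..n} - y" "card S = i - card y" "finite S"
    using obtain_subset_with_card_n[of "i - card y" "{1..n} - y"] by auto
  have "card (y \<union> S) = card y + card S" by (rule card_Un_disjoint) (use S y_fin in auto)
  then have "y \<union> S \<in> layer n i" using S ti y_sub by (intro layerI) auto
  then have "\<exists>p. p \<in> layer n i \<and> y \<subseteq> p" by blast
  then show ?thesis unfolding pp_def by (rule someI_ex)
qed

lemma FF_in_SB:
  assumes ir: "i \<le> r"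
  shows "FF n y i \<in> SB n r y"
  unfolding SB_def
proof (intro CollectI conjI ballI impI)
  show "FF n y i \<in> funs_on (ball_B n r)" by (rule FF_funs_B[OF ir])
  fix x x' assume x: "x \<in> ball_B n r" and x': "x' \<in> ball_B n r"
    and h: "card x = card x' \<and> hdist x y = hdist x' y"
  show "FF n y i x = FF n y i x'"
  proof (cases "card x = i")
    case True
    have "x \<in> layer n i" "x' \<in> layer n i" using x x' h True ball_sub_cube unfolding layer_def by auto
    then show ?thesis using FF_hdist_sym h by blast
  next
    case False
    then show ?thesis using h by (simp add: FF_zero)
  qed
qed

lemma FF_in_W:
  assumes ti: "card y \<le> i" and ir: "i \<le> r"
  shows "FF n y i \<in> W n r y"
proof -
  have "fvs.span (\<Union>z\<in>{z\<in>ball_B n r. card z < card y}. SB n r z) \<subseteq> {g. ip (ball_B n r) (FF n y i) g = 0}"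
  proof (rule fvs.span_minimal[OF _ subspace_ip], rule subsetI)
    fix g assume "g \<in> (\<Union>z\<in>{z\<in>ball_B n r. card z < card y}. SB n r z)"
    then obtain z where z: "z \<in> ball_B n r" "card z < card y" "g \<in> SB n r z" by blast
    have "(\<lambda>x. if x \<in> layer n i then g x else 0) \<in> U n i (card z)"
      by (rule SB_restr_in_U[OF z(1) z(3) ir])
    also have "\<dots> \<subseteq> U n i (card y - 1)" by (rule U_mono) (use z in linarith)
    finally have "ip (layer n i) (FF n y i) (\<lambda>x. if x \<in> layer n i then g x else 0) = 0"
      by (rule FF_orth_U[rotated 1, OF ti ir]) (use z in linarith)
    then show "g \<in> {g. ip (ball_B n r) (FF n y i) g = 0}"
      using ip_restrict[OF FF_funs ir] by simp
  qed
  then have "FF n y i \<in> orth (ball_B n r) (fvs.span (\<Union>z\<in>{z\<in>ball_B n r. card z < card y}. SB n r z))"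
    unfolding orth_def using FF_funs_B[OF ir] by blast
  then show ?thesis unfolding W_def using FF_in_SB[OF ir] by blast
qed


lemma ip_comm: "ip X f g = ip X g f"
  unfolding ip_def by (simp add: mult.commute)

lemma W_in_span:
  assumes w: "w \<in> W n r y"
  shows "w \<in> fvs.span (FF n y ` {card y..r})"
proof -
  have wS: "w \<in> SB n r y" using w unfolding W_def by blast
  have wO: "\<forall>g\<in>fvs.span (\<Union>z\<in>{z\<in>ball_B n r. card z < card y}. SB n r z). ip (ball_B n r) w g = 0"
    using w unfolding W_def orth_def by blast
  have wf: "\<forall>x. x \<notin> ball_B n r \<longrightarrow> w x = 0"
    and ws: "\<forall>x\<in>ball_B n r. \<forall>x'\<in>ball_B n r. card x = card x' \<and> hdist x y = hdist x' y \<longrightarrow> w x = w x'"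
    using wS unfolding SB_iff by blast+
  define c where "c i = (if card y \<le> i then w (pp n y i) else 0)" for i
  have restr: "(\<lambda>x. if x \<in> layer n i then w x else 0) = fscale (c i) (FF n y i)" if ir: "i \<le> r" for i
  proof -
    let ?h = "(\<lambda>x. if x \<in> layer n i then w x else 0) - fscale (c i) (FF n y i)"
    have "?h = 0"
    proof (rule vanish[OF y_cube])
      show "?h \<in> funs_on (layer n i)" using FF_funs unfolding funs_on_def fscale_def by simp
      show "\<forall>x\<in>layer n i. \<forall>x'\<in>layer n i. hdist x y = hdist x' y \<longrightarrow> ?h x = ?h x'"
      proof (intro ballI impI)
        fix x x' assume x: "x \<in> layer n i" and x': "x' \<in> layer n i" and h: "hdist x y = hdist x' y"
        have "x \<in> ball_B n r" "x' \<in> ball_B n r" using x x' layer_sub_ball[OF ir] by blast+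
        moreover have "card x = card x'" using layerD[OF x] layerD[OF x'] by simp
        ultimately have "w x = w x'" using ws h by blast
        moreover have "FF n y i x = FF n y i x'" by (rule FF_hdist_sym[OF x x' h])
        ultimately show "?h x = ?h x'" using x x' unfolding fscale_def by simp
      qed
      show "\<forall>z\<in>cube n. card z < card y \<longrightarrow> (\<Sum>x\<in>{x\<in>layer n i. z \<subseteq> x}. ?h x) = 0"
      proof (intro ballI impI)
        fix z assume z: "z \<in> cube n" and zt: "card z < card y"
        have zB: "z \<in> ball_B n r" using z zt t_le_r unfolding ball_B_def by simp
        have "gz n i z \<in> fvs.span (\<Union>z\<in>{z\<in>ball_B n r. card z < card y}. SB n r z)"
          by (rule fvs.span_base) (use zB zt gz_in_SB[OF z ir] in blast)
        then have "ip (ball_B n r) w (gz n i z) = 0" using wO by blast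
        moreover have "gz n i z \<in> funs_on (layer n i)" unfolding funs_on_def gz_def by simp
        ultimately have "ip (layer n i) (\<lambda>x. if x \<in> layer n i then w x else 0) (gz n i z) = 0"
          using ip_restrict[OF _ ir, where f="gz n i z" and g=w] by (simp add: ip_comm)
        then have s1: "(\<Sum>x\<in>{x\<in>layer n i. z \<subseteq> x}. w x) = 0" unfolding ip_gz by simp
        have s2: "c i * (\<Sum>x\<in>{x\<in>layer n i. z \<subseteq> x}. FF n y i x) = 0"
          using FF_orth_gz[OF _ ir z zt] unfolding c_def by auto
        have "(\<Sum>x\<in>{x\<in>layer n i. z \<subseteq> x}. ?h x)
            = (\<Sum>x\<in>{x\<in>layer n i. z \<subseteq> x}. w x) - c i * (\<Sum>x\<in>{x\<in>layer n i. z \<subseteq> x}. FF n y i x)"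
          unfolding fscale_def by (simp add: sum_subtractf sum_distrib_left)
        then show "(\<Sum>x\<in>{x\<in>layer n i. z \<subseteq> x}. ?h x) = 0" using s1 s2 by simp
      qed
      show "\<forall>x\<in>layer n i. y \<subseteq> x \<longrightarrow> ?h x = 0"
      proof (intro ballI impI)
        fix x assume x: "x \<in> layer n i" and yx: "y \<subseteq> x"
        have ti: "card y \<le> i" using yx layerD[OF x] card_mono by metis
        have p: "pp n y i \<in> layer n i" "y \<subseteq> pp n y i" using pp_prop[OF ti ir] by blast+
        have "x \<inter> y = y" "pp n y i \<inter> y = y" using yx p(2) by blast+
        then have "hdist x y = hdist (pp n y i) y"
          using hdist_card[of x y] hdist_card[of "pp n y i" y] layerD[OF x] layerD[OF p(1)] y_fin by simp
        moreover have "x \<in> ball_B n r" "pp n y i \<in> ball_B n r" using x p(1) layer_sub_ball[OF ir] by blast+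
        moreover have "card x = card (pp n y i)" using layerD[OF x] layerD[OF p(1)] by simp
        ultimately have "w x = w (pp n y i)" using ws by blast
        then show "?h x = 0" using x yx ti FF_top[OF x yx] unfolding c_def fscale_def by simp
      qed
    qed
    then show ?thesis by (simp add: fun_eq_iff)
  qed
  have eq: "w = (\<Sum>i\<in>{card y..r}. fscale (c i) (FF n y i))"
  proof
    fix x
    show "w x = (\<Sum>i\<in>{card y..r}. fscale (c i) (FF n y i)) x"
    proof (cases "x \<in> ball_B n r")
      case False
      have "FF n y i x = 0" if "i \<in> {card y..r}" for i
        using that False layer_sub_ball[of i r n] by (intro FF_zero') auto
      then show ?thesis using False wf unfolding sum_fun_apply fscale_def by simp
    next
      case True
      define m where "m = card x"
      have mr: "m \<le> r" using True unfolding ball_B_def m_def by simp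
      have xl: "x \<in> layer n m" using True ball_sub_cube unfolding layer_def m_def by auto
      have wx: "w x = c m * FF n y m x" using fun_cong[OF restr[OF mr], of x] xl unfolding fscale_def by simp
      have "(\<Sum>i\<in>{card y..r}. fscale (c i) (FF n y i)) x = (\<Sum>i\<in>{card y..r}. if i = m then c m * FF n y m x else 0)"
        unfolding sum_fun_apply fscale_def by (rule sum.cong) (auto simp: FF_zero m_def)
      also have "\<dots> = (if m \<in> {card y..r} then c m * FF n y m x else 0)" by simp
      also have "\<dots> = w x" using wx mr unfolding c_def by auto
      finally show ?thesis by simp
    qed
  qed
  show ?thesis unfolding eq
    by (intro fvs.span_sum fvs.span_scale fvs.span_base) auto
qed

lemma FF_pp_eval:
  assumes "card y \<le> i" "i \<le> r"
  shows "FF n y j (pp n y i) = (if j = i then 1 else 0)"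
proof -
  have p: "pp n y i \<in> layer n i" "y \<subseteq> pp n y i" using pp_prop[OF assms] by blast+
  show ?thesis
  proof (cases "j = i")
    case True then show ?thesis using FF_top[OF p] by simp
  next
    case False then show ?thesis using layerD[OF p(1)] by (simp add: FF_zero)
  qed
qed

lemma FF_inj: "inj_on (FF n y) {card y..r}"
proof (rule inj_onI)
  fix i j assume i: "i \<in> {card y..r}" and j: "j \<in> {card y..r}" and e: "FF n y i = FF n y j"
  have "FF n y i (pp n y i) = FF n y j (pp n y i)" using e by simp
  then show "i = j" using FF_pp_eval[of i] i by (simp split: if_splits)
qed

lemma FF_indep: "fvs.independent (FF n y ` {card y..r})"
  unfolding fvs.independent_explicit_module
proof (intro allI impI)
  fix T u v
  assume fT: "finite T" and T: "T \<subseteq> FF n y ` {card y..r}" and s: "(\<Sum>v\<in>T. fscale (u v) v) = 0" and v: "v \<in> T"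
  obtain i where i: "i \<in> {card y..r}" "v = FF n y i" using T v by blast
  have "0 = (\<Sum>v\<in>T. fscale (u v) v) (pp n y i)" using s by simp
  also have "\<dots> = (\<Sum>v'\<in>T. if v' = v then u v else 0)"
    unfolding sum_fun_apply fscale_def
  proof (rule sum.cong[OF refl])
    fix v' assume "v' \<in> T"
    then obtain j where j: "j \<in> {card y..r}" "v' = FF n y j" using T by blast
    have "v' = v \<longleftrightarrow> j = i" using FF_inj i j unfolding inj_on_def by blast
    then show "u v' * v' (pp n y i) = (if v' = v then u v else 0)"
      using FF_pp_eval[of i j] i j by auto
  qed
  also have "\<dots> = u v" using fT v by simp
  finally show "u v = 0" by simp
qed

end


theorem corollary2p4:
  fixes n r t :: nat and y :: "nat set"
  assumes "2 * r \<le> n"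
    and "y \<in> ball_B n r"
    and "card y = t"
  shows "fvs.dim (W n r y) = r - t + 1
    \<and> (\<forall>i\<in>{t..r}. \<exists>!f. is_fy n y i f)
    \<and> inj_on (fy n y) {t..r}
    \<and> fvs.independent (fy n y ` {t..r})
    \<and> fy n y ` {t..r} \<subseteq> W n r y
    \<and> fvs.span (fy n y ` {t..r}) = W n r y
    \<and> (t < r \<longrightarrow> adj n r (fy n y t) = fscale (gamma n t t) (fy n y (t + 1)))
    \<and> (t < r \<longrightarrow> adj n r (fy n y r) = fscale (beta n r) (fy n y (r - 1)))
    \<and> (\<forall>i. t < i \<and> i < r \<longrightarrow>
           adj n r (fy n y i) = fscale (beta n i) (fy n y (i - 1)) + fscale (gamma n t i) (fy n y (i + 1)))
    \<and> (t = r \<longrightarrow> adj n r (fy n y t) = 0)"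
proof -
  note rn = assms(1) and yB = assms(2)
  have tr: "t \<le> r" using t_le_r[OF rn yB] assms(3) by simp
  have fyeq: "\<And>i. t \<le> i \<Longrightarrow> i \<le> r \<Longrightarrow> fy n y i = FF n y i"
    using fy_eq(1)[OF rn yB] assms(3) by blast
  have ex: "\<forall>i\<in>{t..r}. \<exists>!f. is_fy n y i f"
    using fy_eq(2)[OF rn yB] assms(3) by auto
  have img: "fy n y ` {t..r} = FF n y ` {t..r}"
    by (rule image_cong) (auto simp: fyeq)
  have inj: "inj_on (fy n y) {t..r}"
  proof -
    have "inj_on (FF n y) {t..r}" using FF_inj[OF rn yB] assms(3) by simp
    moreover have "\<And>i. i \<in> {t..r} \<Longrightarrow> fy n y i = FF n y i" using fyeq by auto
    ultimately show ?thesis using inj_on_cong[of "{t..r}" "fy n y" "FF n y"] by blast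
  qed
  have indep: "fvs.independent (FF n y ` {t..r})" using FF_indep[OF rn yB] assms(3) by simp
  have sub: "FF n y ` {t..r} \<subseteq> W n r y" using FF_in_W[OF rn yB] assms(3) by auto
  have sup: "W n r y \<subseteq> fvs.span (FF n y ` {t..r})" using W_in_span[OF rn yB] assms(3) by auto
  have cardB: "card (FF n y ` {t..r}) = r - t + 1"
    using card_image[OF FF_inj[OF rn yB]] assms(3) tr by simp
  have dim: "fvs.dim (W n r y) = r - t + 1" by (rule fvs.dim_unique[OF sub sup indep cardB])
  have span: "fvs.span (FF n y ` {t..r}) = W n r y" by (rule fvs.span_subspace[OF sub sup subspace_W])
  have adj: "\<And>i x. t \<le> i \<Longrightarrow> i \<le> r \<Longrightarrow> adj n r (FF n y i) x =
      (if t < i then beta n i * FF n y (i - 1) x else 0) + (if i < r then gamma n t i * FF n y (i + 1) x else 0)"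
    using adj_FF[OF rn yB] assms(3) by blast
  have a1: "t < r \<longrightarrow> adj n r (fy n y t) = fscale (gamma n t t) (fy n y (t + 1))"
  proof
    assume tr': "t < r"
    have e: "fy n y t = FF n y t" "fy n y (t + 1) = FF n y (t + 1)" using fyeq tr' by auto
    show "adj n r (fy n y t) = fscale (gamma n t t) (fy n y (t + 1))"
      unfolding e fscale_def by (rule ext) (use adj[of t] tr' in simp)
  qed
  have a2: "t < r \<longrightarrow> adj n r (fy n y r) = fscale (beta n r) (fy n y (r - 1))"
  proof
    assume tr': "t < r"
    have e: "fy n y r = FF n y r" "fy n y (r - 1) = FF n y (r - 1)" using fyeq tr' by auto
    show "adj n r (fy n y r) = fscale (beta n r) (fy n y (r - 1))"
      unfolding e fscale_def by (rule ext) (use adj[of r] tr' in simp)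
  qed
  have a3: "\<forall>i. t < i \<and> i < r \<longrightarrow>
           adj n r (fy n y i) = fscale (beta n i) (fy n y (i - 1)) + fscale (gamma n t i) (fy n y (i + 1))"
  proof (intro allI impI)
    fix i assume i: "t < i \<and> i < r"
    have e: "fy n y i = FF n y i" "fy n y (i - 1) = FF n y (i - 1)" "fy n y (i + 1) = FF n y (i + 1)"
      using fyeq i by auto
    show "adj n r (fy n y i) = fscale (beta n i) (fy n y (i - 1)) + fscale (gamma n t i) (fy n y (i + 1))"
      unfolding e fscale_def by (rule ext) (use adj[of i] i in simp)
  qed
  have a4: "t = r \<longrightarrow> adj n r (fy n y t) = 0"
  proof
    assume tr': "t = r"
    have e: "fy n y t = FF n y t" using fyeq tr' by auto
    show "adj n r (fy n y t) = 0"
      unfolding e by (rule ext) (use adj[of t] tr' in simp)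
  qed
  show ?thesis using dim ex inj indep sub span a1 a2 a3 a4 unfolding img by blast
qed

end
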